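(* Assume $\overline{c}>p$. Then there exist constants $K_2>0$ and $K_3>0$ such that $$0\le V(x_2,c_1)-V(x_1,c_2)\le\left[K_2+\frac{K_3}{c_1-p}\right](x_2-x_1)+\left[K_2+\frac{K_3x_2}{(c_1-p)^2}\right](c_2-c_1)$$ for all $0\le x_1\le x_2$ and $p<c_1\le c_2\le\overline{c}$.
   Context: Cramér–Lundberg model: the uncontrolled surplus is $X_t=x+pt-\sum_{i=1}^{N_t}U_i$, where $x\ge0$ is the initial surplus, $p>0$ the premium rate, $N_t$ a Poisson process with intensity $\beta>0$, and the claims $U_i$ are i.i.d. positive random variables, independent of $N$, with continuous distribution function $F$; the safety loading condition $p>\beta\mathbb{E}[U_1]$ holds. Standing assumption (A1): $F$ is globally Lipschitz, i.e. $0\le F(y)-F(x)\le K(y-x)$ for $x<y$, for some $K>0$. Let $(\mathcal{F}_t)$ be the completed filtration generated by $X$. Fix $\overline{c}>0$ and a discount rate $q>0$. For $x\ge0$, $c\in[0,\overline{c}]$, $\Pi_{x,c,\overline{c}}$ is the set of càdlàg, adapted, non-decreasing processes $C=(C_t)$ with $c\le C_t\le\overline{c}$ for all $t$. Controlled surplus $X^C_t=X_t-\int_0^tC_sds$ ($X_0=x$), ruin time $\tau=\inf\{t\ge0:X^C_t<0\}$, $J(x;C)=\mathbb{E}[\int_0^\tau e^{-qs}C_sds]$, $V(x,c)=\sup_{C\in\Pi_{x,c,\overline{c}}}J(x;C)$. Convention: only strategies are considered such that if $C_{t^-}=p$ and $X^C_t=0$ for some $t>0$ then $C_s=p$ for $s\ge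 t$ until ruin; and the only strategy considered in $\Pi_{0,p,\overline{c}}$ is to pay at rate $p$ until the first claim arrival. *)

theory Defs
  imports "HOL-Probability.Probability"
begin

text \<open>E i : i.i.d. exponential inter-arrival times (arrival times S_n = sum of E i, i < n, n >= 1),
  U i : i.i.d. claim sizes (claim number i+1 is U i).\<close>

definition Ncount :: "(nat \<Rightarrow> 'a \<Rightarrow> real) \<Rightarrow> real \<Rightarrow> 'a \<Rightarrow> nat" where
  "Ncount E t \<omega> = card {n::nat. 1 \<le> n \<and> (\<Sum>i<n. E i \<omega>) \<le> t}"

definition surplus :: "(nat \<Rightarrow> 'a \<Rightarrow> real) \<Rightarrow> (nat \<Rightarrow> 'a \<Rightarrow> real) \<Rightarrow> real \<Rightarrow> real
    \<Rightarrow> real \<Rightarrow> 'a \<Rightarrow> real" where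
  "surplus E U p x t \<omega> = x + p * t - (\<Sum>i<Ncount E t \<omega>. U i \<omega>)"

definition filt :: "'a measure \<Rightarrow> (nat \<Rightarrow> 'a \<Rightarrow> real) \<Rightarrow> (nat \<Rightarrow> 'a \<Rightarrow> real) \<Rightarrow> real
    \<Rightarrow> real \<Rightarrow> real \<Rightarrow> 'a measure" where
  "filt M E U p x t = sigma (space M)
     ({(\<lambda>\<omega>. surplus E U p x s \<omega>) -` B \<inter> space M | s B. 0 \<le> s \<and> s \<le> t \<and> B \<in> sets borel}
      \<union> null_sets M)"

definition ctrl_surplus :: "(nat \<Rightarrow> 'a \<Rightarrow> real) \<Rightarrow> (nat \<Rightarrow> 'a \<Rightarrow> real) \<Rightarrow> real \<Rightarrow> real
    \<Rightarrow> (real \<Rightarrow> 'a \<Rightarrow> real) \<Rightarrow> real \<Rightarrow> 'a \<Rightarrow> real" where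
  "ctrl_surplus E U p x C t \<omega> = surplus E U p x t \<omega> - integral {0..t} (\<lambda>s. C s \<omega>)"

definition ruin_time :: "(nat \<Rightarrow> 'a \<Rightarrow> real) \<Rightarrow> (nat \<Rightarrow> 'a \<Rightarrow> real) \<Rightarrow> real \<Rightarrow> real
    \<Rightarrow> (real \<Rightarrow> 'a \<Rightarrow> real) \<Rightarrow> 'a \<Rightarrow> ereal" where
  "ruin_time E U p x C \<omega> = Inf {ereal t | t. 0 \<le> t \<and> ctrl_surplus E U p x C t \<omega> < 0}"

text \<open>Admissible strategies Pi_{x,c,cbar}: cadlag (right-continuous; left limits exist
  automatically by monotonicity and boundedness), adapted, non-decreasing, with values in
  [c, cbar], plus the two conventions of the paper.\<close>
definition strategies :: "'a measure \<Rightarrow> (nat \<Rightarrow> 'a \<Rightarrow> real) \<Rightarrow> (nat \<Rightarrow> 'a \<Rightarrow> real) \<Rightarrow> real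
    \<Rightarrow> real \<Rightarrow> real \<Rightarrow> real \<Rightarrow> (real \<Rightarrow> 'a \<Rightarrow> real) set" where
  "strategies M E U p cbar x c = {C.
     (\<forall>\<omega>\<in>space M. \<forall>t\<ge>0. c \<le> C t \<omega> \<and> C t \<omega> \<le> cbar) \<and>
     (\<forall>\<omega>\<in>space M. mono_on {0..} (\<lambda>t. C t \<omega>)) \<and>
     (\<forall>\<omega>\<in>space M. \<forall>t\<ge>0. continuous (at_right t) (\<lambda>s. C s \<omega>)) \<and>
     (\<forall>t\<ge>0. (\<lambda>\<omega>. C t \<omega>) \<in> borel_measurable (filt M E U p x t)) \<and>
     (\<forall>\<omega>\<in>space M. \<forall>t>0. ((\<lambda>s. C s \<omega>) \<longlongrightarrow> p) (at_left t) \<and> ctrl_surplus E U p x C t \<omega> = 0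
         \<longrightarrow> (\<forall>s\<ge>t. ereal s < ruin_time E U p x C \<omega> \<longrightarrow> C s \<omega> = p)) \<and>
     (x = 0 \<and> c = p \<longrightarrow> (\<forall>\<omega>\<in>space M. \<forall>t. 0 \<le> t \<and> t < E 0 \<omega> \<longrightarrow> C t \<omega> = p))}"

definition Jval :: "'a measure \<Rightarrow> (nat \<Rightarrow> 'a \<Rightarrow> real) \<Rightarrow> (nat \<Rightarrow> 'a \<Rightarrow> real) \<Rightarrow> real
    \<Rightarrow> real \<Rightarrow> real \<Rightarrow> (real \<Rightarrow> 'a \<Rightarrow> real) \<Rightarrow> ennreal" where
  "Jval M E U p q x C = (\<integral>\<^sup>+ \<omega>. (\<integral>\<^sup>+ s. indicator {s. 0 \<le> s \<and> ereal s < ruin_time E U p x C \<omega>} s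
        * ennreal (exp (- q * s) * C s \<omega>) \<partial>lborel) \<partial>M)"

definition Vval :: "'a measure \<Rightarrow> (nat \<Rightarrow> 'a \<Rightarrow> real) \<Rightarrow> (nat \<Rightarrow> 'a \<Rightarrow> real) \<Rightarrow> real
    \<Rightarrow> real \<Rightarrow> real \<Rightarrow> real \<Rightarrow> real \<Rightarrow> real" where
  "Vval M E U p q cbar x c = enn2real (SUP C \<in> strategies M E U p cbar x c. Jval M E U p q x C)"

end

theory Submission
  imports Defs
begin


context prob_space begin

lemma E_pos_AE:
  assumes D: "distributed M lborel X (exponential_density l)" and l: "0 < l"
  shows "AE x in M. 0 < X x"
proof -
  have m: "X \<in> borel_measurable M" using distributed_measurable[OF D] by simp
  have "\<P>(x in M. 0 < X x) = 1" using exponential_distributedD_gt[OF D _ l, of 0] by simp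
  then show ?thesis by (subst (asm) prob_Collect_eq_1) (use m in measurable)
qed

lemma infinitely_many_big:
  fixes E :: "nat \<Rightarrow> 'a \<Rightarrow> real"
  assumes l: "0 < l" and D: "\<And>i. distributed M lborel (E i) (exponential_density l)"
    and ind: "indep_vars (\<lambda>_. borel) X UNIV" and XE: "\<And>i. X (f i) = E i" and inj: "inj f"
  shows "AE \<omega> in M. \<forall>N. \<exists>i\<ge>N. 1 < E i \<omega>"
proof -
 have "AE \<omega> in M. \<exists>i\<ge>N. 1 < E i \<omega>" for N
 proof -
  have m: "\<And>i. E i \<in> borel_measurable M" using distributed_measurable[OF D] by simp
  define A where "A = {\<omega>\<in>space M. \<forall>i\<ge>N. E i \<omega> \<le> 1}"
  have Aev: "A \<in> events" unfolding A_def using m by measurable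
  define a where "a = 1 - exp (- l)"
  have a0: "0 \<le> a" "a < 1" using l by (auto simp: a_def)
  have pE: "prob (E j -` {..1} \<inter> space M) = a" for j
  proof -
    have "E j -` {..1} \<inter> space M = {x\<in>space M. E j x \<le> 1}" by auto
    then show ?thesis using exponential_distributedD_le[OF D[of j] _ l, of 1] by (simp add: a_def)
  qed
  have bound: "prob A \<le> a ^ Suc k" for k
  proof -
    let ?J = "f ` {N..<N + Suc k}"
    have "A \<subseteq> (\<Inter>i\<in>?J. X i -` {..1} \<inter> space M)"
      unfolding A_def using XE by auto
    then have "prob A \<le> prob (\<Inter>i\<in>?J. X i -` {..1} \<inter> space M)"
      using ind by (intro finite_measure_mono sets.finite_INT) (auto simp: indep_vars_def intro!: measurable_sets[of _ M borel])
    also have "\<dots> = (\<Prod>i\<in>?J. prob (X i -` {..1} \<inter> space M))"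
      by (rule indep_varsD[OF ind]) auto
    also have "\<dots> = (\<Prod>j\<in>{N..<N + Suc k}. prob (E j -` {..1} \<inter> space M))"
      using inj by (simp add: prod.reindex inj_on_def XE)
    also have "\<dots> = a ^ Suc k" by (simp add: pE)
    finally show ?thesis .
  qed
  have "(\<lambda>k. a ^ Suc k) \<longlonglongrightarrow> 0"
    using a0 by (intro LIMSEQ_Suc LIMSEQ_power_zero) auto
  then have "prob A \<le> 0" using bound by (intro LIMSEQ_le_const) (auto simp del: power_Suc)
  then have "prob A = 0" using measure_nonneg[of M A] by linarith
  then have "A \<in> null_sets M" using Aev by (intro null_setsI) (simp_all add: emeasure_eq_measure)
  then show "AE \<omega> in M. \<exists>i\<ge>N. 1 < E i \<omega>"
    by (rule AE_I') (auto simp: A_def not_less)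
 qed
 then show ?thesis by (subst AE_all_countable) blast
qed

end

lemma psum_mono:
  fixes e :: "nat \<Rightarrow> real"
  assumes "\<forall>i. 0 \<le> e i" "m \<le> n"
  shows "(\<Sum>i<m. e i) \<le> (\<Sum>i<n. e i)"
  using assms by (intro sum_mono2) auto

lemma finite_counts:
  fixes e :: "nat \<Rightarrow> real"
  assumes nn: "\<forall>i. 0 \<le> e i" and inf: "\<forall>N. \<exists>i\<ge>N. 1 < e i"
  shows "finite {n. 1 \<le> n \<and> (\<Sum>i<n. e i) \<le> t}"
proof -
  have big: "\<exists>n. real k \<le> (\<Sum>i<n. e i)" for k
  proof (induction k)
    case 0
    show ?case by (rule exI[of _ 0]) simp
  next
    case (Suc k)
    then obtain n where n: "real k \<le> (\<Sum>i<n. e i)" by blast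
    obtain i where i: "n \<le> i" "1 < e i" using inf by blast
    have "(\<Sum>i<n. e i) \<le> (\<Sum>i<i. e i)" using psum_mono[OF nn i(1)] .
    then have "real (Suc k) \<le> (\<Sum>j<Suc i. e j)" using n i(2) by simp
    then show ?case by blast
  qed
  obtain k :: nat where k: "t < real k" using reals_Archimedean2 by blast
  obtain n where n: "real k \<le> (\<Sum>i<n. e i)" using big by blast
  have "{n. 1 \<le> n \<and> (\<Sum>i<n. e i) \<le> t} \<subseteq> {..<n}"
  proof
    fix m assume m: "m \<in> {n. 1 \<le> n \<and> (\<Sum>i<n. e i) \<le> t}"
    show "m \<in> {..<n}"
    proof (rule ccontr)
      assume "m \<notin> {..<n}"
      then have "n \<le> m" by simp
      from psum_mono[OF nn this] n k m show False by simp
    qed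
  qed
  then show ?thesis by (rule finite_subset) simp
qed

lemma Ncount_mono:
  assumes fin: "finite {n. 1 \<le> n \<and> (\<Sum>i<n. E i \<omega>) \<le> s}" and "t \<le> s"
  shows "Ncount E t \<omega> \<le> Ncount E s \<omega>"
  unfolding Ncount_def using assms by (intro card_mono) auto

lemma int_split:
  fixes f :: "real \<Rightarrow> real"
  assumes "mono_on {0..} f" "0 \<le> t" "t \<le> s"
  shows "integral {0..s} f = integral {0..t} f + integral {t..s} f"
proof -
  have I: "f integrable_on {0..s}"
    by (rule integrable_on_mono_on) (rule mono_on_subset[OF assms(1)], auto)
  then show ?thesis using Henstock_Kurzweil_Integration.integral_combine[OF assms(2,3) I] by simp
qed

lemma int_lower:
  fixes f :: "real \<Rightarrow> real"
  assumes "mono_on {0..} f" "0 \<le> t" "t \<le> s" "\<forall>r\<ge>0. c \<le> f r"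
  shows "c * (s - t) \<le> integral {t..s} f"
proof -
  have "f integrable_on {t..s}"
    by (rule integrable_on_mono_on) (rule mono_on_subset[OF assms(1)], use assms in auto)
  then have "integral {t..s} (\<lambda>_. c) \<le> integral {t..s} f"
    using assms by (intro integral_le) auto
  then show ?thesis using assms by (simp add: mult.commute)
qed

lemma drift:
  assumes nnE: "\<forall>i. 0 \<le> E i \<omega>" and nnU: "\<forall>i. 0 \<le> U i \<omega>"
    and fin: "\<forall>t. finite {n. 1 \<le> n \<and> (\<Sum>i<n. E i \<omega>) \<le> t}"
    and C: "\<forall>t\<ge>0. c \<le> C t \<omega>" "mono_on {0..} (\<lambda>t. C t \<omega>)"
    and ts: "0 \<le> t" "t \<le> s"
  shows "ctrl_surplus E U p x C s \<omega> \<le> ctrl_surplus E U p x C t \<omega> - (c - p) * (s - t)"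
proof -
  have "Ncount E t \<omega> \<le> Ncount E s \<omega>" using fin ts(2) by (intro Ncount_mono) auto
  then have "(\<Sum>i<Ncount E t \<omega>. U i \<omega>) \<le> (\<Sum>i<Ncount E s \<omega>. U i \<omega>)"
    using psum_mono[of "\<lambda>i. U i \<omega>"] nnU by blast
  moreover have "integral {0..s} (\<lambda>r. C r \<omega>) = integral {0..t} (\<lambda>r. C r \<omega>) + integral {t..s} (\<lambda>r. C r \<omega>)"
    using int_split[OF C(2) ts] .
  moreover have "c * (s - t) \<le> integral {t..s} (\<lambda>r. C r \<omega>)"
    using int_lower[OF C(2) ts] C(1) by blast
  ultimately show ?thesis unfolding ctrl_surplus_def surplus_def by (simp add: algebra_simps)
qed

lemma start:
  assumes nnU: "\<forall>i. 0 \<le> U i \<omega>"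
  shows "ctrl_surplus E U p x C 0 \<omega> \<le> x"
  unfolding ctrl_surplus_def surplus_def using nnU by (simp add: sum_nonneg)

lemma nn_integral_add_simple_le:
  assumes g: "simple_function M g"
  shows "(\<integral>\<^sup>+x. f x + g x \<partial>M) \<le> integral\<^sup>N M f + integral\<^sup>N M g"
proof -
  have "integral\<^sup>S M h \<le> integral\<^sup>N M f + integral\<^sup>N M g"
    if h: "simple_function M h" "h \<le> (\<lambda>x. f x + g x)" "\<forall>x. h x < top" for h
  proof -
    let ?h = "\<lambda>x. h x - g x"
    have s': "simple_function M ?h" using h g by auto
    have le': "?h \<le> f"
    proof (rule le_funI)
      fix x
      have "h x \<le> f x + g x" using h(2) by (simp add: le_fun_def)
      moreover have "h x < top" using h(3) by blast
      ultimately show "h x - g x \<le> f x" by (auto simp: ennreal_minus_le_iff add.commute)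
    qed
    have le2: "h x \<le> ?h x + g x" for x
    proof (cases "g x \<le> h x")
      case True then show ?thesis by (simp add: diff_add_cancel_ennreal)
    next
      case False then show ?thesis by (metis add.commute add_increasing2 linorder_not_le order_less_imp_le zero_le)
    qed
    have "integral\<^sup>S M h \<le> integral\<^sup>S M (\<lambda>x. ?h x + g x)"
      using h s' g le2 by (intro simple_integral_mono) auto
    also have "\<dots> = integral\<^sup>S M ?h + integral\<^sup>S M g"
      using s' g by (intro simple_integral_add) auto
    also have "integral\<^sup>S M ?h \<le> integral\<^sup>N M f"
      unfolding nn_integral_def using s' le' by (intro SUP_upper) auto
    also have "integral\<^sup>S M g = integral\<^sup>N M g"
      using g by (simp add: nn_integral_eq_simple_integral)
    finally show ?thesis by simp
  qed
  then show ?thesis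
    unfolding nn_integral_def_finite[of M "\<lambda>x. f x + g x"]
    by (intro SUP_least) auto
qed

lemma ruin_compare:
  fixes X X' :: "real \<Rightarrow> real"
  assumes k: "0 < k" and A: "0 \<le> A" and d: "0 \<le> d" and x2: "0 \<le> x2"
    and low: "\<forall>t\<ge>0. X t - A - d*t \<le> X' t"
    and drift: "\<forall>t s. 0 \<le> t \<longrightarrow> t \<le> s \<longrightarrow> X s \<le> X t - k*(s-t)"
    and st: "\<forall>t\<ge>0. X t \<le> x2 - k*t"
  shows "Inf {ereal t | t. 0 \<le> t \<and> X t < 0}
          \<le> Inf {ereal t | t. 0 \<le> t \<and> X' t < 0} + ereal ((A + d*x2/k)/k)"
proof (rule dense_ge)
  define L where "L = (A + d*x2/k)/k"
  have L0: "0 \<le> L" unfolding L_def using k A d x2 by simp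
  fix y assume y: "Inf {ereal t | t. 0 \<le> t \<and> X' t < 0} + ereal ((A + d*x2/k)/k) < y"
  show "Inf {ereal t | t. 0 \<le> t \<and> X t < 0} \<le> y"
  proof (cases y)
    case PInf then show ?thesis by simp
  next
    case MInf then show ?thesis using y by simp
  next
    case (real s)
    have "Inf {ereal t | t. 0 \<le> t \<and> X' t < 0} < ereal (s - L)"
      using y real unfolding L_def[symmetric]
      by (cases "Inf {ereal t | t. 0 \<le> t \<and> X' t < 0}") auto
    then obtain z where "z \<in> {ereal t | t. 0 \<le> t \<and> X' t < 0}" "z < ereal (s - L)"
      by (auto simp: Inf_less_iff)
    then obtain t where t: "0 \<le> t" "X' t < 0" "t < s - L" by auto
    have s0: "0 \<le> s" using t L0 by simp
    have "X s < 0"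
    proof (cases "x2/k < t")
      case True
      then have "x2 < k * t" using k by (simp add: field_simps)
      moreover have "k * t < k * s" using k t L0 by simp
      ultimately have "x2 < k * s" by linarith
      moreover have "X s \<le> x2 - k * s" using st s0 by blast
      ultimately show ?thesis by linarith
    next
      case False
      then have "t \<le> x2/k" by simp
      then have "d*t \<le> d*(x2/k)" using d by (rule mult_left_mono)
      moreover have "X t - A - d*t \<le> X' t" using low t(1) by blast
      ultimately have "X t < A + d*x2/k" using t(2) by simp
      also have "\<dots> = k*L" unfolding L_def using k by simp
      finally have "X t < k*L" .
      moreover have "k*L < k*(s - t)" using t k by simp
      moreover have "X s \<le> X t - k*(s-t)" using drift t(1) t(3) L0 by simp
      ultimately show ?thesis by simp
    qed
    then have "ereal s \<in> {ereal t | t. 0 \<le> t \<and> X t < 0}" using s0 by auto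
    then show ?thesis using real by (simp add: Inf_lower)
  qed
qed

lemma inner_compare:
  fixes C C' :: "real \<Rightarrow> real" and \<tau> \<tau>' :: ereal
  assumes tt: "\<tau>' \<le> \<tau>" "\<tau> \<le> \<tau>' + ereal L" and L0: "0 \<le> L"
    and CC: "\<forall>s\<ge>0. C s \<le> C' s" "\<forall>s\<ge>0. C s \<le> cbar" "\<forall>s\<ge>0. 0 \<le> C s" and q: "0 < q"
  shows "(\<integral>\<^sup>+ s. indicator {s. 0 \<le> s \<and> ereal s < \<tau>} s * ennreal (exp (- q * s) * C s) \<partial>lborel)
     \<le> (\<integral>\<^sup>+ s. indicator {s. 0 \<le> s \<and> ereal s < \<tau>'} s * ennreal (exp (- q * s) * C' s) \<partial>lborel)
        + ennreal (cbar * L)"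
proof -
  define r where "r = real_of_ereal \<tau>'"
  define g where "g = (\<lambda>s::real. ennreal cbar * indicator {r..r+L} s)"
  have "0 \<le> C 0" "C 0 \<le> cbar" using CC by auto
  then have cb: "0 \<le> cbar" by linarith
  have pw: "indicator {s. 0 \<le> s \<and> ereal s < \<tau>} s * ennreal (exp (- q * s) * C s)
     \<le> indicator {s. 0 \<le> s \<and> ereal s < \<tau>'} s * ennreal (exp (- q * s) * C' s) + g s" for s
  proof (cases "0 \<le> s \<and> ereal s < \<tau>")
    case False then show ?thesis by simp
  next
    case True
    show ?thesis
    proof (cases "ereal s < \<tau>'")
      case True
      have "exp (- q * s) * C s \<le> exp (- q * s) * C' s" using CC \<open>0 \<le> s \<and> ereal s < \<tau>\<close>
        by (intro mult_left_mono) auto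
      then have "indicator {s. 0 \<le> s \<and> ereal s < \<tau>} s * ennreal (exp (- q * s) * C s)
          \<le> indicator {s. 0 \<le> s \<and> ereal s < \<tau>'} s * ennreal (exp (- q * s) * C' s)"
        using True \<open>0 \<le> s \<and> ereal s < \<tau>\<close> by (simp add: ennreal_leI)
      then show ?thesis by (rule add_increasing2[OF zero_le])
    next
      case False
      have fin: "\<tau>' = ereal r"
        using False True tt unfolding r_def by (cases \<tau>') auto
      have "\<tau> \<le> ereal (r+L)" using tt(2) fin by simp
      then have "ereal s < ereal (r+L)" using True by (meson order_less_le_trans)
      then have "s \<in> {r..r+L}" using False fin by auto
      have "exp (- q * s) * C s \<le> 1 * cbar"
        using True CC q by (intro mult_mono) auto
      then have "indicator {s. 0 \<le> s \<and> ereal s < \<tau>} s * ennreal (exp (- q * s) * C s) \<le> g s"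
        using True \<open>s \<in> {r..r+L}\<close> unfolding g_def by (simp add: ennreal_leI)
      then show ?thesis by (rule add_increasing[OF zero_le])
    qed
  qed
  have "(\<integral>\<^sup>+ s. indicator {s. 0 \<le> s \<and> ereal s < \<tau>} s * ennreal (exp (- q * s) * C s) \<partial>lborel)
     \<le> (\<integral>\<^sup>+ s. indicator {s. 0 \<le> s \<and> ereal s < \<tau>'} s * ennreal (exp (- q * s) * C' s) + g s \<partial>lborel)"
    using pw by (intro nn_integral_mono) auto
  also have "\<dots> \<le> (\<integral>\<^sup>+ s. indicator {s. 0 \<le> s \<and> ereal s < \<tau>'} s * ennreal (exp (- q * s) * C' s) \<partial>lborel)
        + integral\<^sup>N lborel g"
    unfolding g_def by (intro nn_integral_add_simple_le) auto
  also have "integral\<^sup>N lborel g = ennreal (cbar * L)"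
    unfolding g_def using L0 cb by (simp add: nn_integral_cmult_indicator ennreal_mult)
  finally show ?thesis .
qed

lemma surplus_shift: "surplus E U p x s \<omega> = surplus E U p y s \<omega> + (x - y)"
  by (simp add: surplus_def)

lemma filt_sub:
  "{(\<lambda>\<omega>. surplus E U p x s \<omega>) -` B \<inter> space M | s B. 0 \<le> s \<and> s \<le> t \<and> B \<in> sets borel}
   \<subseteq> {(\<lambda>\<omega>. surplus E U p y s \<omega>) -` B \<inter> space M | s B. 0 \<le> s \<and> s \<le> t \<and> B \<in> sets borel}"
proof
  fix S assume "S \<in> {(\<lambda>\<omega>. surplus E U p x s \<omega>) -` B \<inter> space M | s B. 0 \<le> s \<and> s \<le> t \<and> B \<in> sets borel}"
  then obtain s B where S: "S = (\<lambda>\<omega>. surplus E U p x s \<omega>) -` B \<inter> space M" "0 \<le> s" "s \<le> t" "B \<in> sets borel"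
    by blast
  define B' where "B' = (\<lambda>z::real. z + (x - y)) -` B"
  have B': "B' \<in> sets borel"
  proof -
    have "(\<lambda>z::real. z + (x - y)) \<in> borel_measurable borel" by simp
    from measurable_sets[OF this S(4)] show ?thesis by (simp add: B'_def)
  qed
  have eq: "S = (\<lambda>\<omega>. surplus E U p y s \<omega>) -` B' \<inter> space M"
  proof (rule set_eqI)
    fix \<omega>
    show "\<omega> \<in> S \<longleftrightarrow> \<omega> \<in> (\<lambda>\<omega>. surplus E U p y s \<omega>) -` B' \<inter> space M"
      unfolding S(1) B'_def vimage_def using surplus_shift[of E U p x s \<omega> y] by simp
  qed
  show "S \<in> {(\<lambda>\<omega>. surplus E U p y s \<omega>) -` B \<inter> space M | s B. 0 \<le> s \<and> s \<le> t \<and> B \<in> sets borel}"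
    apply (rule CollectI)
    apply (rule exI[of _ s])
    apply (rule exI[of _ B'])
    using eq S(2,3) B' by simp
qed

lemma filt_indep: "filt M E U p x t = filt M E U p y t"
proof -
  have "{(\<lambda>\<omega>. surplus E U p x s \<omega>) -` B \<inter> space M | s B. 0 \<le> s \<and> s \<le> t \<and> B \<in> sets borel}
   = {(\<lambda>\<omega>. surplus E U p y s \<omega>) -` B \<inter> space M | s B. 0 \<le> s \<and> s \<le> t \<and> B \<in> sets borel}"
    by (rule equalityI) (rule filt_sub)+
  then show ?thesis unfolding filt_def by simp
qed

lemma no_tendsto_p:
  fixes C :: "real \<Rightarrow> real"
  assumes "\<forall>s\<ge>0. c \<le> C s" "p < c" "0 < t"
  shows "\<not> (C \<longlongrightarrow> p) (at_left t)"
proof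
  assume lim: "(C \<longlongrightarrow> p) (at_left t)"
  have "eventually (\<lambda>s. s \<in> {0<..<t}) (at_left t)" using assms(3) by (rule eventually_at_left_real)
  moreover have "\<forall>s. s \<in> {0<..<t} \<longrightarrow> c \<le> C s" using assms(1) by auto
  ultimately have ev: "eventually (\<lambda>s. c \<le> C s) (at_left t)" by (simp add: eventually_mono)
  have "at_left t \<noteq> (bot :: real filter)" by simp
  from tendsto_lowerbound[OF lim ev this] have "c \<le> p" .
  then show False using assms(2) by simp
qed



lemma J_bound:
  assumes P: "prob_space M" and q: "0 < q" and C: "C \<in> strategies M E U p cbar x c" and c0: "0 \<le> c"
  shows "Jval M E U p q x C \<le> ennreal (cbar / q)"
proof -
  have Cb: "\<forall>\<omega>\<in>space M. \<forall>t\<ge>0. c \<le> C t \<omega> \<and> C t \<omega> \<le> cbar" using C by (simp add: strategies_def)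
  have dens: "(\<integral>\<^sup>+ s. ennreal (exponential_density q s * s ^ 0) \<partial>lborel) = 1"
    using nn_integral_erlang_ith_moment[OF q, of 0 0] by simp
  have inner: "(\<integral>\<^sup>+ s. indicator {s. 0 \<le> s \<and> ereal s < ruin_time E U p x C \<omega>} s
        * ennreal (exp (- q * s) * C s \<omega>) \<partial>lborel) \<le> ennreal (cbar / q)" if \<omega>: "\<omega> \<in> space M" for \<omega>
  proof -
    have "(\<integral>\<^sup>+ s. indicator {s. 0 \<le> s \<and> ereal s < ruin_time E U p x C \<omega>} s
        * ennreal (exp (- q * s) * C s \<omega>) \<partial>lborel)
       \<le> (\<integral>\<^sup>+ s. ennreal (cbar / q) * ennreal (exponential_density q s * s ^ 0) \<partial>lborel)"
    proof (intro nn_integral_mono)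
      fix s
      show "indicator {s. 0 \<le> s \<and> ereal s < ruin_time E U p x C \<omega>} s * ennreal (exp (- q * s) * C s \<omega>)
         \<le> ennreal (cbar / q) * ennreal (exponential_density q s * s ^ 0)"
      proof (cases "0 \<le> s \<and> ereal s < ruin_time E U p x C \<omega>")
        case False then show ?thesis by simp
      next
        case True
        have cb0: "0 \<le> cbar" using Cb \<omega> c0 by force
        have "exp (- q * s) * C s \<omega> \<le> exp (- q * s) * cbar" using Cb \<omega> True by (intro mult_left_mono) auto
        also have "\<dots> = (cbar / q) * (exponential_density q s * s ^ 0)"
          using True q by (simp add: exponential_density_def mult.commute)
        finally have "ennreal (exp (- q * s) * C s \<omega>) \<le> ennreal (cbar / q) * ennreal (exponential_density q s * s ^ 0)"
          using cb0 q by (simp add: ennreal_mult'[symmetric] ennreal_leI)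
        then show ?thesis using True by simp
      qed
    qed
    also have "\<dots> = ennreal (cbar / q) * (\<integral>\<^sup>+ s. ennreal (exponential_density q s * s ^ 0) \<partial>lborel)"
      by (rule nn_integral_cmult) simp
    also have "\<dots> = ennreal (cbar / q)" using dens by simp
    finally show ?thesis .
  qed
  have "Jval M E U p q x C \<le> (\<integral>\<^sup>+ \<omega>. ennreal (cbar / q) \<partial>M)"
    unfolding Jval_def using inner by (intro nn_integral_mono) auto
  also have "\<dots> = ennreal (cbar / q)" using prob_space.emeasure_space_1[OF P] by simp
  finally show ?thesis .
qed

lemma strat_sub:
  assumes "p < c1" "c1 \<le> c2"
  shows "strategies M E U p cbar x1 c2 \<subseteq> strategies M E U p cbar x2 c1"
proof
  fix C assume C: "C \<in> strategies M E U p cbar x1 c2"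
  have b: "\<forall>\<omega>\<in>space M. \<forall>t\<ge>0. c2 \<le> C t \<omega> \<and> C t \<omega> \<le> cbar"
   and m: "\<forall>\<omega>\<in>space M. mono_on {0..} (\<lambda>t. C t \<omega>)"
   and r: "\<forall>\<omega>\<in>space M. \<forall>t\<ge>0. continuous (at_right t) (\<lambda>s. C s \<omega>)"
   and a: "\<forall>t\<ge>0. (\<lambda>\<omega>. C t \<omega>) \<in> borel_measurable (filt M E U p x1 t)"
    using C unfolding strategies_def by blast+
  have b1: "\<forall>\<omega>\<in>space M. \<forall>t\<ge>0. c1 \<le> C t \<omega> \<and> C t \<omega> \<le> cbar" using b assms by force
  have a1: "\<forall>t\<ge>0. (\<lambda>\<omega>. C t \<omega>) \<in> borel_measurable (filt M E U p x2 t)"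
    using a filt_indep[of M E U p x1 _ x2] by simp
  have v: "\<not> (((\<lambda>s. C s \<omega>) \<longlongrightarrow> p) (at_left t))" if "\<omega> \<in> space M" "0 < t" for \<omega> t
    using no_tendsto_p[of c1 "\<lambda>s. C s \<omega>" p t] b1 that assms by auto
  show "C \<in> strategies M E U p cbar x2 c1"
    unfolding strategies_def mem_Collect_eq
    using b1 m r a1 v assms by auto
qed

lemma J_mono_x:
  assumes "x1 \<le> x2"
  shows "Jval M E U p q x1 C \<le> Jval M E U p q x2 C"
proof -
  have rt: "ruin_time E U p x1 C \<omega> \<le> ruin_time E U p x2 C \<omega>" for \<omega>
  proof -
    have eq: "ctrl_surplus E U p x2 C t \<omega> = ctrl_surplus E U p x1 C t \<omega> + (x2 - x1)" for t
      by (simp add: ctrl_surplus_def surplus_def)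
    have "{ereal t |t. 0 \<le> t \<and> ctrl_surplus E U p x2 C t \<omega> < 0}
        \<subseteq> {ereal t |t. 0 \<le> t \<and> ctrl_surplus E U p x1 C t \<omega> < 0}"
      using assms by (auto simp: eq)
    then show ?thesis unfolding ruin_time_def by (rule Inf_superset_mono)
  qed
  show ?thesis
    unfolding Jval_def
  proof (intro nn_integral_mono)
    fix \<omega> s
    show "indicator {s. 0 \<le> s \<and> ereal s < ruin_time E U p x1 C \<omega>} s * ennreal (exp (- q * s) * C s \<omega>)
       \<le> indicator {s. 0 \<le> s \<and> ereal s < ruin_time E U p x2 C \<omega>} s * ennreal (exp (- q * s) * C s \<omega>)"
      using rt[of \<omega>] by (intro mult_right_mono) (auto simp: indicator_def order_less_le_trans)
  qed
qed

lemma max_strat: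
  assumes "p < c1" "c1 \<le> c2" "c2 \<le> cbar" and C: "C \<in> strategies M E U p cbar x2 c1"
  shows "(\<lambda>t \<omega>. max (C t \<omega>) c2) \<in> strategies M E U p cbar x1 c2"
proof -
  have b: "\<forall>\<omega>\<in>space M. \<forall>t\<ge>0. c1 \<le> C t \<omega> \<and> C t \<omega> \<le> cbar"
   and m: "\<forall>\<omega>\<in>space M. mono_on {0..} (\<lambda>t. C t \<omega>)"
   and r: "\<forall>\<omega>\<in>space M. \<forall>t\<ge>0. continuous (at_right t) (\<lambda>s. C s \<omega>)"
   and a: "\<forall>t\<ge>0. (\<lambda>\<omega>. C t \<omega>) \<in> borel_measurable (filt M E U p x2 t)"
    using C unfolding strategies_def by blast+
  have b2: "\<forall>\<omega>\<in>space M. \<forall>t\<ge>0. c2 \<le> max (C t \<omega>) c2 \<and> max (C t \<omega>) c2 \<le> cbar" using b assms by auto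
  have m2: "\<forall>\<omega>\<in>space M. mono_on {0..} (\<lambda>t. max (C t \<omega>) c2)"
  proof
    fix \<omega> assume "\<omega> \<in> space M"
    then have "mono_on {0..} (\<lambda>t. C t \<omega>)" using m by blast
    then show "mono_on {0..} (\<lambda>t. max (C t \<omega>) c2)"
      unfolding mono_on_def by (meson max.mono order_refl)
  qed
  have r2: "\<forall>\<omega>\<in>space M. \<forall>t\<ge>0. continuous (at_right t) (\<lambda>s. max (C s \<omega>) c2)"
    using r by (auto intro: continuous_max)
  have a2: "\<forall>t\<ge>0. (\<lambda>\<omega>. max (C t \<omega>) c2) \<in> borel_measurable (filt M E U p x1 t)"
  proof (intro allI impI)
    fix t :: real assume "0 \<le> t"
    then have "(\<lambda>\<omega>. C t \<omega>) \<in> borel_measurable (filt M E U p x2 t)"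
      using a by blast
    then have "(\<lambda>\<omega>. C t \<omega>) \<in> borel_measurable (filt M E U p x1 t)"
      using filt_indep[of M E U p x2 t x1] by simp
    then show "(\<lambda>\<omega>. max (C t \<omega>) c2) \<in> borel_measurable (filt M E U p x1 t)" by measurable
  qed
  have v: "\<not> (((\<lambda>s. max (C s \<omega>) c2) \<longlongrightarrow> p) (at_left t))" if "\<omega> \<in> space M" "0 < t" for \<omega> t
    using no_tendsto_p[of c2 "\<lambda>s. max (C s \<omega>) c2" p t] b2 that assms by auto
  show ?thesis
    unfolding strategies_def mem_Collect_eq
    using b2 m2 r2 a2 v assms by auto
qed



lemma int_max_bounds:
  fixes f :: "real \<Rightarrow> real"
  assumes m: "mono_on {0..} f" and lb: "\<forall>s\<ge>0. c1 \<le> f s" and c: "c1 \<le> c2" and t: "0 \<le> t"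
  shows "integral {0..t} f \<le> integral {0..t} (\<lambda>s. max (f s) c2)"
    and "integral {0..t} (\<lambda>s. max (f s) c2) \<le> integral {0..t} f + (c2 - c1) * t"
proof -
  have mt: "mono_on {0..t} f" by (rule mono_on_subset[OF m]) auto
  have fi: "f integrable_on {0..t}" by (rule integrable_on_mono_on[OF mt])
  have mt2: "mono_on {0..t} (\<lambda>s. max (f s) c2)"
    using mt unfolding mono_on_def by (meson max.mono order_refl)
  have gi: "(\<lambda>s. max (f s) c2) integrable_on {0..t}" by (rule integrable_on_mono_on[OF mt2])
  show "integral {0..t} f \<le> integral {0..t} (\<lambda>s. max (f s) c2)"
    using fi gi by (intro integral_le) auto
  have ci: "(\<lambda>s. c2 - c1) integrable_on {0..t}" by (rule integrable_const_ivl)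
  have "integral {0..t} (\<lambda>s. max (f s) c2) \<le> integral {0..t} (\<lambda>s. f s + (c2 - c1))"
    using gi integrable_add[OF fi ci] lb c by (intro integral_le) auto
  also have "\<dots> = integral {0..t} f + integral {0..t} (\<lambda>s. c2 - c1)"
    using fi ci by (rule integral_add)
  also have "integral {0..t} (\<lambda>s. c2 - c1) = (c2 - c1) * t" using t by simp
  finally show "integral {0..t} (\<lambda>s. max (f s) c2) \<le> integral {0..t} f + (c2 - c1) * t" .
qed

lemma path_compare:
  assumes nnE: "\<forall>i. 0 \<le> E i \<omega>" and nnU: "\<forall>i. 0 \<le> U i \<omega>"
    and fin: "\<forall>t. finite {n. 1 \<le> n \<and> (\<Sum>i<n. E i \<omega>) \<le> t}"
    and Cb: "\<forall>t\<ge>0. c1 \<le> C t \<omega> \<and> C t \<omega> \<le> cbar" and Cm: "mono_on {0..} (\<lambda>t. C t \<omega>)"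
    and par: "0 \<le> x1" "x1 \<le> x2" "p < c1" "c1 \<le> c2" "0 < q" and p0: "0 \<le> p"
  shows "(\<integral>\<^sup>+ s. indicator {s. 0 \<le> s \<and> ereal s < ruin_time E U p x2 C \<omega>} s
            * ennreal (exp (- q * s) * C s \<omega>) \<partial>lborel)
    \<le> (\<integral>\<^sup>+ s. indicator {s. 0 \<le> s \<and> ereal s < ruin_time E U p x1 (\<lambda>t \<omega>. max (C t \<omega>) c2) \<omega>} s
            * ennreal (exp (- q * s) * max (C s \<omega>) c2) \<partial>lborel)
       + ennreal (cbar * (((x2 - x1) + (c2 - c1) * x2 / (c1 - p)) / (c1 - p)))"
proof -
  define C' where "C' = (\<lambda>t \<omega>. max (C t \<omega>) c2)"
  define X where "X = (\<lambda>t. ctrl_surplus E U p x2 C t \<omega>)"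
  define X' where "X' = (\<lambda>t. ctrl_surplus E U p x1 C' t \<omega>)"
  define L where "L = ((x2 - x1) + (c2 - c1) * x2 / (c1 - p)) / (c1 - p)"
  have k: "0 < c1 - p" using par by simp
  have L0: "0 \<le> L" unfolding L_def using par by simp
  have Cl: "\<forall>t\<ge>0. c1 \<le> C t \<omega>" using Cb by blast
  have eqX': "X' t = X t - (x2 - x1) - (integral {0..t} (\<lambda>s. C' s \<omega>) - integral {0..t} (\<lambda>s. C s \<omega>))" for t
    unfolding X_def X'_def by (simp add: ctrl_surplus_def surplus_def)
  have low: "\<forall>t\<ge>0. X t - (x2 - x1) - (c2 - c1) * t \<le> X' t"
    using int_max_bounds(2)[OF Cm Cl par(4)] unfolding eqX' C'_def by force
  have le: "\<forall>t\<ge>0. X' t \<le> X t"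
    using int_max_bounds(1)[OF Cm Cl par(4)] par unfolding eqX' C'_def by force
  have drift': "\<forall>t s. 0 \<le> t \<longrightarrow> t \<le> s \<longrightarrow> X s \<le> X t - (c1 - p) * (s - t)"
    unfolding X_def using drift[where E=E and U=U and \<omega>=\<omega> and C=C and c=c1 and p=p and x=x2, OF nnE nnU fin Cl Cm] by blast
  have st: "\<forall>t\<ge>0. X t \<le> x2 - (c1 - p) * t"
  proof (intro allI impI)
    fix t :: real assume "0 \<le> t"
    then have "X t \<le> X 0 - (c1 - p) * (t - 0)" using drift' by blast
    moreover have "X 0 \<le> x2" unfolding X_def by (rule start[where E=E and U=U and \<omega>=\<omega>, OF nnU])
    ultimately show "X t \<le> x2 - (c1 - p) * t" by simp
  qed
  have rc: "Inf {ereal t | t. 0 \<le> t \<and> X t < 0}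
          \<le> Inf {ereal t | t. 0 \<le> t \<and> X' t < 0} + ereal L"
    unfolding L_def using ruin_compare[OF k _ _ _ low drift' st] par by simp
  have tt1: "ruin_time E U p x1 C' \<omega> \<le> ruin_time E U p x2 C \<omega>"
  proof -
    have "{ereal t | t. 0 \<le> t \<and> X t < 0} \<subseteq> {ereal t | t. 0 \<le> t \<and> X' t < 0}"
      using le by force
    then show ?thesis unfolding ruin_time_def X_def X'_def by (rule Inf_superset_mono)
  qed
  have tt2: "ruin_time E U p x2 C \<omega> \<le> ruin_time E U p x1 C' \<omega> + ereal L"
    using rc unfolding ruin_time_def X_def X'_def .
  have CC: "\<forall>s\<ge>0. C s \<omega> \<le> max (C s \<omega>) c2" "\<forall>s\<ge>0. C s \<omega> \<le> cbar" "\<forall>s\<ge>0. 0 \<le> C s \<omega>"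
  proof -
    have "0 \<le> C s \<omega>" "C s \<omega> \<le> cbar" if "0 \<le> s" for s
    proof -
      have "c1 \<le> C s \<omega>" "C s \<omega> \<le> cbar" using Cb that by blast+
      then show "0 \<le> C s \<omega>" "C s \<omega> \<le> cbar" using par p0 by linarith+
    qed
    then show "\<forall>s\<ge>0. C s \<omega> \<le> max (C s \<omega>) c2" "\<forall>s\<ge>0. C s \<omega> \<le> cbar" "\<forall>s\<ge>0. 0 \<le> C s \<omega>"
      by auto
  qed
  show ?thesis
    using inner_compare[OF tt1 tt2 L0 CC par(5)] unfolding L_def C'_def .
qed



lemma alg_id:
  fixes k cb A d x :: real
  assumes "k \<noteq> 0"
  shows "cb * ((A + d * x / k) / k) = cb / k * A + cb * x / k^2 * d"
  using assms by (simp add: field_simps power2_eq_square)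

theorem proposition3p3:
  fixes M :: "'a measure" and E U :: "nat \<Rightarrow> 'a \<Rightarrow> real"
    and \<beta> p q cbar :: real
  assumes "prob_space M"
    and "\<beta> > 0" and "p > 0" and "q > 0"
    and "\<forall>i. distributed M lborel (E i) (exponential_density \<beta>)"
    and "prob_space.indep_vars M (\<lambda>_. borel) (\<lambda>j. case j of Inl i \<Rightarrow> E i | Inr i \<Rightarrow> U i) UNIV"
    and "\<forall>i. distr M borel (U i) = distr M borel (U 0)"
    and "\<forall>i. AE \<omega> in M. U i \<omega> > 0"
    and "\<forall>y. isCont (cdf (distr M borel (U 0))) y"
    and "\<exists>K>0. \<forall>a b. a < b \<longrightarrow> cdf (distr M borel (U 0)) b - cdf (distr M borel (U 0)) a \<le> K * (b - a)"
    and "integrable M (U 0)"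
    and "p > \<beta> * (\<integral>\<omega>. U 0 \<omega> \<partial>M)"
    and "cbar > p"
  shows "\<exists>K2>0. \<exists>K3>0. \<forall>x1 x2 c1 c2. 0 \<le> x1 \<longrightarrow> x1 \<le> x2 \<longrightarrow> p < c1 \<longrightarrow> c1 \<le> c2 \<longrightarrow> c2 \<le> cbar \<longrightarrow>
     0 \<le> Vval M E U p q cbar x2 c1 - Vval M E U p q cbar x1 c2 \<and>
     Vval M E U p q cbar x2 c1 - Vval M E U p q cbar x1 c2
       \<le> (K2 + K3 / (c1 - p)) * (x2 - x1) + (K2 + K3 * x2 / (c1 - p)^2) * (c2 - c1)"
proof -
  interpret P: prob_space M by (rule assms(1))
  define Xc where "Xc = (\<lambda>j. case j of Inl i \<Rightarrow> E i | Inr i \<Rightarrow> U i)"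
  have AEE: "AE \<omega> in M. \<forall>i. 0 < E i \<omega>"
  proof -
    have "\<forall>i. AE \<omega> in M. 0 < E i \<omega>" using assms(5) assms(2) by (auto intro: P.E_pos_AE)
    then show ?thesis by (simp add: AE_all_countable)
  qed
  have AEU: "AE \<omega> in M. \<forall>i. 0 < U i \<omega>" using assms(8) by (simp add: AE_all_countable)
  have AEinf: "AE \<omega> in M. \<forall>N. \<exists>i\<ge>N. 1 < E i \<omega>"
  proof (rule P.infinitely_many_big[of \<beta> E Xc Inl])
    show "0 < \<beta>" by (rule assms(2))
    show "\<And>i. distributed M lborel (E i) (exponential_density \<beta>)" using assms(5) by blast
    show "P.indep_vars (\<lambda>_. borel) Xc UNIV" using assms(6) unfolding Xc_def .
    show "\<And>i. Xc (Inl i) = E i" by (simp add: Xc_def)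
    show "inj Inl" by simp
  qed
  define good where "good \<omega> \<longleftrightarrow> (\<forall>i. 0 \<le> E i \<omega>) \<and> (\<forall>i. 0 \<le> U i \<omega>)
      \<and> (\<forall>t. finite {n. 1 \<le> n \<and> (\<Sum>i<n. E i \<omega>) \<le> t})" for \<omega>
  have G: "AE \<omega> in M. good \<omega>"
    using AEE AEU AEinf
  proof eventually_elim
    case (elim \<omega>)
    then have nn: "\<forall>i. 0 \<le> E i \<omega>" by (simp add: less_imp_le)
    moreover have "\<forall>i. 0 \<le> U i \<omega>" using elim by (simp add: less_imp_le)
    moreover have "\<forall>t. finite {n. 1 \<le> n \<and> (\<Sum>i<n. E i \<omega>) \<le> t}"
      using finite_counts[of "\<lambda>i. E i \<omega>"] nn elim by blast
    ultimately show ?case unfolding good_def by blast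
  qed
  let ?S = "\<lambda>x c. strategies M E U p cbar x c"
  let ?J = "\<lambda>x C. Jval M E U p q x C"
  have fin: "(SUP C \<in> ?S x c. ?J x C) \<le> ennreal (cbar / q)" if "0 \<le> c" for x c
    by (rule SUP_least) (rule J_bound[OF assms(1) assms(4) _ that])
  have main: "0 \<le> Vval M E U p q cbar x2 c1 - Vval M E U p q cbar x1 c2 \<and>
     Vval M E U p q cbar x2 c1 - Vval M E U p q cbar x1 c2
       \<le> (1 + cbar / (c1 - p)) * (x2 - x1) + (1 + cbar * x2 / (c1 - p)^2) * (c2 - c1)"
    if par: "0 \<le> x1" "x1 \<le> x2" "p < c1" "c1 \<le> c2" "c2 \<le> cbar" for x1 x2 c1 c2
  proof -
    define L where "L = ((x2 - x1) + (c2 - c1) * x2 / (c1 - p)) / (c1 - p)"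
    define B where "B = ennreal (cbar * L)"
    let ?S1 = "SUP C \<in> ?S x2 c1. ?J x2 C"
    let ?S2 = "SUP C \<in> ?S x1 c2. ?J x1 C"
    have c10: "0 \<le> c1" "0 \<le> c2" using par assms(3) by linarith+
    have f1: "?S1 < top" using fin[OF c10(1), of x2] by (simp add: order_le_less_trans)
    have f2: "?S2 < top" using fin[OF c10(2), of x1] by (simp add: order_le_less_trans)
    have lower: "?S2 \<le> ?S1"
    proof (rule SUP_mono)
      fix C assume "C \<in> ?S x1 c2"
      then have "C \<in> ?S x2 c1" using strat_sub[OF par(3,4)] by blast
      moreover have "?J x1 C \<le> ?J x2 C" using J_mono_x[OF par(2)] .
      ultimately show "\<exists>m\<in>?S x2 c1. ?J x1 C \<le> ?J x2 m" by blast
    qed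
    have upper: "?S1 \<le> ?S2 + B"
    proof (rule SUP_least)
      fix C assume C: "C \<in> ?S x2 c1"
      define C' where "C' = (\<lambda>t \<omega>. max (C t \<omega>) c2)"
      have C': "C' \<in> ?S x1 c2" unfolding C'_def by (rule max_strat[OF par(3,4,5) C])
      have Cb: "\<forall>\<omega>\<in>space M. \<forall>t\<ge>0. c1 \<le> C t \<omega> \<and> C t \<omega> \<le> cbar"
        and Cm: "\<forall>\<omega>\<in>space M. mono_on {0..} (\<lambda>t. C t \<omega>)"
        using C unfolding strategies_def by blast+
      have "?J x2 C \<le> (\<integral>\<^sup>+ \<omega>. (\<integral>\<^sup>+ s. indicator {s. 0 \<le> s \<and> ereal s < ruin_time E U p x1 C' \<omega>} s
            * ennreal (exp (- q * s) * C' s \<omega>) \<partial>lborel) + B \<partial>M)"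
        unfolding Jval_def
      proof (rule nn_integral_mono_AE)
        show "AE \<omega> in M. (\<integral>\<^sup>+ s. indicator {s. 0 \<le> s \<and> ereal s < ruin_time E U p x2 C \<omega>} s
            * ennreal (exp (- q * s) * C s \<omega>) \<partial>lborel)
          \<le> (\<integral>\<^sup>+ s. indicator {s. 0 \<le> s \<and> ereal s < ruin_time E U p x1 C' \<omega>} s
            * ennreal (exp (- q * s) * C' s \<omega>) \<partial>lborel) + B"
          using G AE_space
        proof eventually_elim
          case (elim \<omega>)
          have g: "\<forall>i. 0 \<le> E i \<omega>" "\<forall>i. 0 \<le> U i \<omega>" "\<forall>t. finite {n. 1 \<le> n \<and> (\<Sum>i<n. E i \<omega>) \<le> t}"
            using elim(1) unfolding good_def by blast+
          have "\<forall>t\<ge>0. c1 \<le> C t \<omega> \<and> C t \<omega> \<le> cbar" "mono_on {0..} (\<lambda>t. C t \<omega>)"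
            using Cb Cm elim(2) by blast+
          from path_compare[where E=E and U=U and \<omega>=\<omega> and C=C and p=p and q=q, OF g this par(1,2,3,4) assms(4) less_imp_le[OF assms(3)]]
          show ?case unfolding C'_def B_def L_def .
        qed
      qed
      also have "\<dots> \<le> ?J x1 C' + (\<integral>\<^sup>+ \<omega>. B \<partial>M)"
        unfolding Jval_def by (rule nn_integral_add_simple_le) simp
      also have "(\<integral>\<^sup>+ \<omega>. B \<partial>M) = B" using P.emeasure_space_1 by simp
      also have "?J x1 C' \<le> ?S2" using C' by (rule SUP_upper)
      finally show "?J x2 C \<le> ?S2 + B" by simp
    qed
    have L0: "0 \<le> L" unfolding L_def using par by simp
    have cb0: "0 \<le> cbar" using par c10 by linarith
    have V1: "Vval M E U p q cbar x2 c1 = enn2real ?S1" by (simp add: Vval_def)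
    have V2: "Vval M E U p q cbar x1 c2 = enn2real ?S2" by (simp add: Vval_def)
    have "enn2real ?S2 \<le> enn2real ?S1" using lower f1 by (rule enn2real_mono)
    moreover have "enn2real ?S1 \<le> enn2real (?S2 + B)"
      using upper f2 by (intro enn2real_mono) (auto simp: B_def)
    moreover have "enn2real (?S2 + B) = enn2real ?S2 + cbar * L"
      using f2 L0 cb0 by (simp add: B_def enn2real_plus)
    moreover have "cbar * L \<le> (1 + cbar / (c1 - p)) * (x2 - x1) + (1 + cbar * x2 / (c1 - p)^2) * (c2 - c1)"
    proof -
      have k: "0 < c1 - p" using par by simp
      have "cbar * L = cbar / (c1 - p) * (x2 - x1) + cbar * x2 / (c1 - p)^2 * (c2 - c1)"
        unfolding L_def using alg_id[of "c1 - p" cbar "x2 - x1" "c2 - c1" x2] k by simp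
      also have "\<dots> \<le> (1 + cbar / (c1 - p)) * (x2 - x1) + (1 + cbar * x2 / (c1 - p)^2) * (c2 - c1)"
        using par by (simp add: algebra_simps)
      finally show ?thesis .
    qed
    ultimately show ?thesis unfolding V1 V2 by linarith
  qed
  show ?thesis
    apply (rule exI[of _ 1])
    apply (simp only: zero_less_one simp_thms)
    apply (rule exI[of _ cbar])
    using assms(3,13) main by auto
qed

end
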